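(* Let $\mathcal W$ be a cylindric wiring diagram of a bi-infinite reduced word in $\hat S_n$, lifted to the universal cover with wire and chamber labels as below, and let $\tau:\mathbb Z^n\to\mathbb R\setminus\{0\}$ be a cylindric Berenstein–Hirota–Zelevinsky datum. Suppose every crossing of $\mathcal W$ carries the weight $$a=(\alpha_i-\alpha_j)\frac{\tau(\mathbf s)\,\tau(\mathbf s+e_i+e_j)}{\tau(\mathbf s+e_i)\,\tau(\mathbf s+e_j)},$$ where $i$ and $j$ are the residues mod $n$ of the labels of the upper and lower wires of (a lift of) the crossing, $\mathbf s$ is the label of the chamber directly below it (so that the chamber directly above has label $\mathbf s+e_i+e_j$ and the two side chambers have labels $\mathbf s+e_i$, $\mathbf s+e_j$). Then after applying any finite sequence of weighted braid moves and commutation moves to $\mathcal W$, the weight of every crossing of the resulting diagram is again given by the same formula (with the chamber labels of the new diagram).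
   Context: $\hat S_n$: generators $s_0,\dots,s_{n-1}$ (indices mod $n$), relations $s_i^2=1$, $s_is_js_i=s_js_is_j$ if $i-j\equiv\pm1$, $s_is_j=s_js_i$ if $i-j\not\equiv0,\pm1\pmod n$. Wiring diagram: letters are drawn left to right on a cylinder with wires in positions $1,\dots,n$ (mod $n$), $s_i$ being a crossing of positions $i,i+1$ ($s_0$: positions $n$ and $1$); the upper wire of a crossing is the one passing from the higher to the lower position. Universal cover: positions are integers, each crossing lifting to crossings of positions $p,p+1$ for all $p\equiv i$; lifted wires are labelled by integers according to their positions at a fixed vertical line, and labels are carried along by moves. Chamber label: if $S$ is the set of labels of wires passing below a chamber, its label is $(\mathbf s_1,\dots,\mathbf s_n)$ with $\mathbf s_i=\lceil\max\{b\in S:b\equiv i \bmod n\}/n\rceil$. Each wire labelled $b$ has parameter $\alpha_{b \bmod n}$ where $\alpha_1,\dots,\alpha_n$ are fixed reals (residues taken in $\{1,\dots,n\}$). $e_1,\dots,e_n$ is the standard basis of $\mathbb Z^n$. A BHZ datum is a function $\tau:\mathbb Z^n\to\mathbb R$ such that for all $\mathbf s\in\mathbb Z^n$ and distinct $i,j,k\in\{1,\dots,n\}$: $(\alpha_i-\alpha_j)\tau(\mathbf s+e_k)\tau(\mathbf s+e_i+e_j)+(\alpha_j-\alpha_k)\tau(\mathbf s+e_i)\tau(\mathbf s+e_j+e_k)+(\alpha_k-\alpha_i)\tau(\mathbf s+e_j)\tau(\mathbf s+e_i+e_k)=0$; it is cylindric if moreover $\tau(\mathbf s+e_1+\dots+e_n)=\tau(\mathbf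 s)$ for all $\mathbf s$ (so the weight formula does not depend on the chosen lift). Weighted moves: $s_i(a)s_j(b)s_i(c)\mapsto s_j(\tfrac{bc}{a+c})s_i(a+c)s_j(\tfrac{ab}{a+c})$ if $i-j\equiv\pm1$, $s_i(a)s_j(b)\mapsto s_j(b)s_i(a)$ if $i-j\not\equiv0,\pm1\pmod n$. *)

theory Defs
  imports Complex_Main
begin

definition resid :: "nat \<Rightarrow> int \<Rightarrow> nat" where
  "resid n b = (if b mod int n = 0 then n else nat (b mod int n))"

text \<open>The letter s_i acts on positions of the universal cover by swapping
  positions p and p+1 for every p congruent to i mod n.\<close>
definition sw :: "nat \<Rightarrow> nat \<Rightarrow> int \<Rightarrow> int" where
  "sw n i p = (if p mod int n = int i then p + 1
               else if (p - 1) mod int n = int i then p - 1 else p)"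

text \<open>Product of a word as an affine permutation (faithful model of the affine symmetric group).\<close>
definition word_perm :: "nat \<Rightarrow> nat list \<Rightarrow> int \<Rightarrow> int" where
  "word_perm n xs = foldr (\<lambda>i f. sw n i \<circ> f) xs id"

definition reduced_word :: "nat \<Rightarrow> nat list \<Rightarrow> bool" where
  "reduced_word n xs \<longleftrightarrow> (\<forall>x\<in>set xs. x < n) \<and>
     (\<forall>ys. (\<forall>y\<in>set ys. y < n) \<and> word_perm n ys = word_perm n xs \<longrightarrow> length xs \<le> length ys)"

definition biinf_reduced :: "nat \<Rightarrow> (int \<Rightarrow> nat) \<Rightarrow> bool" where
  "biinf_reduced n w \<longleftrightarrow> (\<forall>t. w t < n) \<and>
     (\<forall>t m. reduced_word n (map (\<lambda>k. w (t + int k)) [0..<m]))"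

text \<open>Z^n modelled as functions nat => int supported in {1..n}.\<close>
definition zvec :: "nat \<Rightarrow> (nat \<Rightarrow> int) set" where
  "zvec n = {s. \<forall>k. k \<notin> {1..n} \<longrightarrow> s k = 0}"

definition uvec :: "nat \<Rightarrow> nat \<Rightarrow> int" where
  "uvec i = (\<lambda>k. if k = i then 1 else 0)"

definition vadd :: "(nat \<Rightarrow> int) \<Rightarrow> (nat \<Rightarrow> int) \<Rightarrow> nat \<Rightarrow> int" where
  "vadd f g = (\<lambda>k. f k + g k)"

definition BHZ :: "nat \<Rightarrow> (nat \<Rightarrow> real) \<Rightarrow> ((nat \<Rightarrow> int) \<Rightarrow> real) \<Rightarrow> bool" where
  "BHZ n \<alpha> \<tau> \<longleftrightarrow> (\<forall>s\<in>zvec n. \<forall>i\<in>{1..n}. \<forall>j\<in>{1..n}. \<forall>k\<in>{1..n}.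
     i \<noteq> j \<and> j \<noteq> k \<and> i \<noteq> k \<longrightarrow>
       (\<alpha> i - \<alpha> j) * \<tau> (vadd s (uvec k)) * \<tau> (vadd (vadd s (uvec i)) (uvec j))
     + (\<alpha> j - \<alpha> k) * \<tau> (vadd s (uvec i)) * \<tau> (vadd (vadd s (uvec j)) (uvec k))
     + (\<alpha> k - \<alpha> i) * \<tau> (vadd s (uvec j)) * \<tau> (vadd (vadd s (uvec i)) (uvec k)) = 0)"

definition all_ones :: "nat \<Rightarrow> nat \<Rightarrow> int" where
  "all_ones n = (\<lambda>k. if k \<in> {1..n} then 1 else 0)"

definition cylindric_BHZ :: "nat \<Rightarrow> (nat \<Rightarrow> real) \<Rightarrow> ((nat \<Rightarrow> int) \<Rightarrow> real) \<Rightarrow> bool" where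
  "cylindric_BHZ n \<alpha> \<tau> \<longleftrightarrow> BHZ n \<alpha> \<tau> \<and> (\<forall>s\<in>zvec n. \<tau> (vadd s (all_ones n)) = \<tau> s)"

text \<open>Chamber label of a chamber whose set of wires passing below it is S.\<close>
definition chamber_label :: "nat \<Rightarrow> int set \<Rightarrow> nat \<Rightarrow> int" where
  "chamber_label n S = (\<lambda>r. if r \<in> {1..n}
      then \<lceil>real_of_int (GREATEST b. b \<in> S \<and> resid n b = r) / real n\<rceil> else 0)"

text \<open>L t p = label of the lifted wire at position p on the vertical line just before
  letter t (column t).  Letter t lies between columns t and t+1.\<close>
definition labels_consistent :: "nat \<Rightarrow> (int \<Rightarrow> nat) \<Rightarrow> (int \<Rightarrow> int \<Rightarrow> int) \<Rightarrow> bool" where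
  "labels_consistent n w L \<longleftrightarrow> (\<forall>t. L (t + 1) = L t \<circ> sw n (w t))"

text \<open>Formula for the weight of the lift of letter t crossing positions p and p+1:
  upper wire is the one at position p+1 on column t (going down), lower one at p;
  the chamber directly below has the wires at positions < p below it.\<close>
definition crossing_weight ::
  "nat \<Rightarrow> (nat \<Rightarrow> real) \<Rightarrow> ((nat \<Rightarrow> int) \<Rightarrow> real) \<Rightarrow> (int \<Rightarrow> int \<Rightarrow> int) \<Rightarrow> int \<Rightarrow> int \<Rightarrow> real" where
  "crossing_weight n \<alpha> \<tau> L t p =
     (let i = resid n (L t (p + 1)); j = resid n (L t p);
          s = chamber_label n {L t q | q. q < p}
      in (\<alpha> i - \<alpha> j) * \<tau> s * \<tau> (vadd (vadd s (uvec i)) (uvec j))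
         / (\<tau> (vadd s (uvec i)) * \<tau> (vadd s (uvec j))))"

definition weights_given ::
  "nat \<Rightarrow> (nat \<Rightarrow> real) \<Rightarrow> ((nat \<Rightarrow> int) \<Rightarrow> real) \<Rightarrow> (int \<Rightarrow> nat) \<Rightarrow> (int \<Rightarrow> real)
     \<Rightarrow> (int \<Rightarrow> int \<Rightarrow> int) \<Rightarrow> bool" where
  "weights_given n \<alpha> \<tau> w a L \<longleftrightarrow>
     (\<forall>t p. p mod int n = int (w t) \<longrightarrow> a t = crossing_weight n \<alpha> \<tau> L t p)"

definition adjacent_letters :: "nat \<Rightarrow> nat \<Rightarrow> nat \<Rightarrow> bool" where
  "adjacent_letters n i j \<longleftrightarrow> (int i - int j) mod int n \<in> {1, int n - 1}"

definition commuting_letters :: "nat \<Rightarrow> nat \<Rightarrow> nat \<Rightarrow> bool" where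
  "commuting_letters n i j \<longleftrightarrow> (int i - int j) mod int n \<notin> {0, 1, int n - 1}"

text \<open>Labels are carried along: the new labelling is consistent with the new word and
  agrees with the old one on column k (left of the move).\<close>
definition wmove :: "nat \<Rightarrow> (int \<Rightarrow> nat) \<times> (int \<Rightarrow> real) \<times> (int \<Rightarrow> int \<Rightarrow> int)
                          \<Rightarrow> (int \<Rightarrow> nat) \<times> (int \<Rightarrow> real) \<times> (int \<Rightarrow> int \<Rightarrow> int) \<Rightarrow> bool" where
  "wmove n C C' \<longleftrightarrow> (case C of (w, a, L) \<Rightarrow> case C' of (w', a', L') \<Rightarrow>
     (\<exists>k. labels_consistent n w' L' \<and> L' k = L k \<and>
       ((adjacent_letters n (w k) (w (k + 1)) \<and> w (k + 2) = w k \<and> a k + a (k + 2) \<noteq> 0 \<and>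
         w' = w(k := w (k + 1), k + 1 := w k, k + 2 := w (k + 1)) \<and>
         a' = a(k := a (k + 1) * a (k + 2) / (a k + a (k + 2)),
                k + 1 := a k + a (k + 2),
                k + 2 := a k * a (k + 1) / (a k + a (k + 2))))
        \<or>
        (commuting_letters n (w k) (w (k + 1)) \<and>
         w' = w(k := w (k + 1), k + 1 := w k) \<and>
         a' = a(k := a (k + 1), k + 1 := a k)))))"

end

theory Submission
  imports Defs
begin

lemma mod_small: "(N::int) > 0 \<Longrightarrow> -N \<le> v \<Longrightarrow> v < 2*N \<Longrightarrow> v mod N = (if v < 0 then v+N else if v < N then v else v - N)"
proof -
  assume N: "N > 0" "-N \<le> v" "v < 2*N"
  show ?thesis
  proof (cases "v < 0")
    case True
    have "v mod N = (v + N) mod N" by simp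
    also have "\<dots> = v + N" using True N by (intro mod_pos_pos_trivial) auto
    finally show ?thesis using True by simp
  next
    case False
    show ?thesis
    proof (cases "v < N")
      case True then show ?thesis using False by (simp add: mod_pos_pos_trivial)
    next
      case F2: False
      have "v mod N = (v - N) mod N" by (simp add: mod_diff_right_eq[symmetric])
      also have "\<dots> = v - N" using F2 N by (intro mod_pos_pos_trivial) auto
      finally show ?thesis using False F2 by simp
    qed
  qed
qed

lemma modp1: "(N::int) > 1 \<Longrightarrow> (p+1) mod N = (if p mod N = N - 1 then 0 else p mod N + 1)"
proof -
  assume N: "N > 1"
  define r where "r = p mod N"
  have r: "0 \<le> r" "r < N" using N unfolding r_def by auto
  have "(p+1) mod N = (r + 1) mod N" unfolding r_def by (simp add: mod_add_left_eq)
  moreover have "(r + 1) mod N = (if r = N - 1 then 0 else r + 1)" using r N mod_small[of N "r + 1"] by auto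
  ultimately show ?thesis unfolding r_def[symmetric] by simp
qed

lemma modm1: "(N::int) > 1 \<Longrightarrow> (p-1) mod N = (if p mod N = 0 then N - 1 else p mod N - 1)"
proof -
  assume N: "N > 1"
  define r where "r = p mod N"
  have r: "0 \<le> r" "r < N" using N unfolding r_def by auto
  have "(p-1) mod N = (r - 1) mod N" unfolding r_def by (simp add: mod_diff_left_eq)
  moreover have "(r - 1) mod N = (if r = 0 then N - 1 else r - 1)" using r N mod_small[of N "r - 1"] by auto
  ultimately show ?thesis unfolding r_def[symmetric] by simp
qed

lemma modp2: "(N::int) > 2 \<Longrightarrow> (p+2) mod N = (if p mod N = N - 1 then 1 else if p mod N = N - 2 then 0 else p mod N + 2)"
proof -
  assume N: "N > 2"
  define r where "r = p mod N"
  have r: "0 \<le> r" "r < N" using N unfolding r_def by auto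
  have "(p+2) mod N = (r + 2) mod N" unfolding r_def by (simp add: mod_add_left_eq)
  moreover have "(r + 2) mod N = (if r = N - 1 then 1 else if r = N - 2 then 0 else r + 2)" using r N mod_small[of N "r + 2"] by auto
  ultimately show ?thesis unfolding r_def[symmetric] by simp
qed

lemma modm2: "(N::int) > 2 \<Longrightarrow> (p-2) mod N = (if p mod N = 0 then N - 2 else if p mod N = 1 then N - 1 else p mod N - 2)"
proof -
  assume N: "N > 2"
  define r where "r = p mod N"
  have r: "0 \<le> r" "r < N" using N unfolding r_def by auto
  have "(p-2) mod N = (r - 2) mod N" unfolding r_def by (simp add: mod_diff_left_eq)
  moreover have "(r - 2) mod N = (if r = 0 then N - 2 else if r = 1 then N - 1 else r - 2)" using r N mod_small[of N "r - 2"] by auto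
  ultimately show ?thesis unfolding r_def[symmetric] by simp
qed


lemma modm3: "(N::int) > 2 \<Longrightarrow> (p-3) mod N = (if p mod N < 3 then p mod N - 3 + N else p mod N - 3)"
proof -
  assume N: "N > 2"
  define r where "r = p mod N"
  have r: "0 \<le> r" "r < N" using N unfolding r_def by auto
  have "(p-3) mod N = (r - 3) mod N" unfolding r_def by (simp add: mod_diff_left_eq)
  moreover have "(r - 3) mod N = (if r < 3 then r - 3 + N else r - 3)" using r N mod_small[of N "r - 3"] by auto
  ultimately show ?thesis unfolding r_def[symmetric] by simp
qed

lemma adj_lin: "i < n \<Longrightarrow> j < n \<Longrightarrow> n \<ge> 3 \<Longrightarrow> adjacent_letters n i j \<longleftrightarrow>
   (int i - int j = 1 \<or> int i - int j = 1 - int n \<or> int i - int j = -1 \<or> int i - int j = int n - 1)"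
  unfolding adjacent_letters_def using mod_small[of "int n" "int i - int j"] by auto

lemma comm_lin: "i < n \<Longrightarrow> j < n \<Longrightarrow> n \<ge> 3 \<Longrightarrow> commuting_letters n i j \<longleftrightarrow>
   \<not>(int i - int j = 0 \<or> int i - int j = 1 \<or> int i - int j = 1 - int n \<or> int i - int j = -1 \<or> int i - int j = int n - 1)"
  unfolding commuting_letters_def using mod_small[of "int n" "int i - int j"] by auto

lemma sw_sw: "n \<ge> 2 \<Longrightarrow> sw n i (sw n i p) = p"
  using modp1[of "int n" p] modm1[of "int n" p] pos_mod_bound[of "int n" p] pos_mod_sign[of "int n" p]
  by (auto simp: sw_def)

lemma sw_shift: "sw n i (p + int n) = sw n i p + int n"
proof -
  have "(p + int n - 1) mod int n = (p - 1) mod int n"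
    by (metis add_diff_eq diff_add_eq mod_add_self2)
  thus ?thesis by (simp add: sw_def)
qed

lemma sw_v1: "p mod int n = int i \<Longrightarrow> sw n i p = p + 1" by (simp add: sw_def)
lemma sw_v2: "n \<ge> 2 \<Longrightarrow> (p - 1) mod int n = int i \<Longrightarrow> sw n i p = p - 1"
  using modm1[of "int n" p] by (auto simp: sw_def split: if_splits)
lemma sw_v3: "p mod int n \<noteq> int i \<Longrightarrow> (p - 1) mod int n \<noteq> int i \<Longrightarrow> sw n i p = p"
  by (simp add: sw_def)

lemma sw_braid0:
  assumes n: "n \<ge> 3" and ij: "i < n" "j < n" and adj: "int j = (if int i = int n - 1 then 0 else int i + 1)"
  shows "sw n i (sw n j (sw n i p)) = sw n j (sw n i (sw n j p))"
proof -
  define N where "N = int n"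
  define r where "r = p mod N"
  have N: "N \<ge> 3" using n N_def by simp
  have r: "0 \<le> r" "r < N" using N unfolding r_def by auto
  note M = modp1[of N p] modm1[of N p] modp2[of N p] modm2[of N p]
  have M1: "(p+1) mod N = (if r = N - 1 then 0 else r + 1)" using M N r_def by simp
  have M2: "(p-1) mod N = (if r = 0 then N - 1 else r - 1)" using M N r_def by simp
  have M3: "(p+2) mod N = (if r = N - 1 then 1 else if r = N - 2 then 0 else r + 2)" using M N r_def by simp
  have M4: "(p-2) mod N = (if r = 0 then N - 2 else if r = 1 then N - 1 else r - 2)" using M N r_def by simp
  have M1b: "(1+p) mod N = (if r = N - 1 then 0 else r + 1)" using M1 by (simp add: add.commute)
  have M5: "(p-3) mod N = (if r < 3 then r - 3 + N else r - 3)" using modm3[of N p] N r_def by simp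
  have ii: "0 \<le> int i" "int i < N" "0 \<le> int j" "int j < N" using ij N_def by auto
  have n2: "n \<ge> 2" using n by simp
  note V = sw_v1[of _ n] sw_v2[OF n2] sw_v3[of _ n]
  consider "r = int i" | "r = int j" | "(p - 1) mod N = int j" | "r \<noteq> int i" "r \<noteq> int j" "(p - 1) mod N \<noteq> int j" by blast
  then show ?thesis
  proof cases
    case 1
    have a: "sw n i p = p + 1" using 1 V r_def N_def by simp
    have b: "sw n j (p+1) = p + 2" using 1 M1 adj sw_v1[of "p+1" n j] N_def N by (auto split: if_splits)
    have c: "sw n i (p+2) = p + 2" using 1 M1 M1b M3 adj V(3)[of "p+2" i] N_def N ii by (auto split: if_splits)
    have d: "sw n j p = p" using 1 M2 adj V(3)[of p j] N_def N ii r_def by (auto split: if_splits)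
    show ?thesis using a b c d by simp
  next
    case 2
    have a: "sw n i p = p - 1" using 2 M2 adj V(2)[of p i] N_def N ii r by (auto split: if_splits)
    have b: "sw n j (p - 1) = p - 1" using 2 M2 M4 adj V(3)[of "p - 1" j] N_def N ii r by (auto split: if_splits)
    have c: "sw n i (p - 1) = p" using V(2)[of "p-1" i] sw_v1[of "p - 1" n i] 2 M2 adj N_def N ii r by (auto split: if_splits)
    have d: "sw n j p = p + 1" using 2 V r_def N_def by simp
    have e: "sw n i (p+1) = p + 1" using 2 M1 adj V(3)[of "p+1" i] N_def N ii r r_def by (auto split: if_splits)
    have f: "sw n j (p+1) = p" using V(2)[of "p+1" j] 2 r_def N_def by simp
    show ?thesis using a b c d e f by simp
  next
    case 3
    have rr: "r = (if int j = N - 1 then 0 else int j + 1)" using 3 M2 r by (auto split: if_splits)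
    have a: "sw n i p = p" using rr adj V(3)[of p i] M2 N_def N ii r_def by (auto split: if_splits)
    have b: "sw n j p = p - 1" using 3 V N_def by simp
    have c: "sw n i (p - 1) = p - 2" using V(2)[of "p-1" i] M2 M4 rr adj N_def N ii r by (auto split: if_splits)
    have d: "sw n j (p - 2) = p - 2" using V(3)[of "p-2" j] M2 M4 M5 rr adj N_def N ii r by (auto split: if_splits)
    have e: "sw n i (p - 2) = p - 1" using sw_v1[of "p-2" n i] M4 rr adj N_def N ii r by (auto split: if_splits)
    show ?thesis using a b c d e by simp
  next
    case 4
    have a: "sw n i p = p"
    proof (rule sw_v3)
      show "p mod int n \<noteq> int i" using 4 r_def N_def by simp
      show "(p - 1) mod int n \<noteq> int i" using 4 adj M2 ii r unfolding N_def[symmetric] by (auto split: if_splits)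
    qed
    have b: "sw n j p = p" using 4 V(3)[of p j] N_def r_def by auto
    show ?thesis using a b by simp
  qed
qed


lemma sw_braid:
  assumes n: "n \<ge> 3" and ij: "i < n" "j < n" and adj: "adjacent_letters n i j"
  shows "sw n i (sw n j (sw n i p)) = sw n j (sw n i (sw n j p))"
proof -
  have "int j = (if int i = int n - 1 then 0 else int i + 1) \<or> int i = (if int j = int n - 1 then 0 else int j + 1)"
    using adj ij n by (auto simp: adj_lin)
  thus ?thesis
  proof
    assume "int j = (if int i = int n - 1 then 0 else int i + 1)"
    thus ?thesis using sw_braid0[OF n ij] by simp
  next
    assume "int i = (if int j = int n - 1 then 0 else int j + 1)"
    thus ?thesis using sw_braid0[OF n ij(2) ij(1)] by simp
  qed
qed

lemma sw_comm:
  assumes n: "n \<ge> 3" and ij: "i < n" "j < n" and cm: "commuting_letters n i j"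
  shows "sw n i (sw n j p) = sw n j (sw n i p)"
proof -
  define N where "N = int n"
  define r where "r = p mod N"
  have N: "N \<ge> 3" using n N_def by simp
  have r: "0 \<le> r" "r < N" using N unfolding r_def by auto
  note M = modp1[of N p] modm1[of N p] modp2[of N p] modm2[of N p]
  have M1: "(p+1) mod N = (if r = N - 1 then 0 else r + 1)" using M N r_def by simp
  have M1b: "(1+p) mod N = (if r = N - 1 then 0 else r + 1)" using M1 by (simp add: add.commute)
  have M2: "(p-1) mod N = (if r = 0 then N - 1 else r - 1)" using M N r_def by simp
  have M4: "(p-2) mod N = (if r = 0 then N - 2 else if r = 1 then N - 1 else r - 2)" using M N r_def by simp
  have ii: "0 \<le> int i" "int i < N" "0 \<le> int j" "int j < N" using ij N_def by auto
  have c: "\<not>(int i - int j = 0 \<or> int i - int j = 1 \<or> int i - int j = 1 - N \<or> int i - int j = -1 \<or> int i - int j = N - 1)"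
    using cm ij n N_def by (simp add: comm_lin)
  have n2: "n \<ge> 2" using n by simp
  have S: "sw n k q = q" if "q mod N \<noteq> int k" "(q - 1) mod N \<noteq> int k" for k q
    using sw_v3[of q n k] that N_def by simp
  consider "r = int i" | "(p - 1) mod N = int i" | "r = int j" | "(p - 1) mod N = int j"
    | "r \<noteq> int i" "r \<noteq> int j" "(p - 1) mod N \<noteq> int i" "(p - 1) mod N \<noteq> int j" by blast
  then show ?thesis
  proof cases
    case 1
    have a: "sw n i p = p + 1" using 1 sw_v1[of p n i] r_def N_def by simp
    have b: "sw n j p = p" using 1 c M2 r ii by (intro S) (auto simp: r_def split: if_splits)
    have d: "sw n j (p+1) = p + 1" using 1 c M1 r ii by (intro S) (auto simp: r_def split: if_splits)
    show ?thesis using a b d by simp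
  next
    case 2
    have a: "sw n i p = p - 1" using 2 sw_v2[OF n2, of p i] N_def by simp
    have b: "sw n j p = p" using 2 c M2 r ii by (intro S) (auto simp: r_def split: if_splits)
    have d: "sw n j (p - 1) = p - 1" using 2 c M2 M4 r ii by (intro S) (auto simp: r_def split: if_splits)
    show ?thesis using a b d by simp
  next
    case 3
    have a: "sw n j p = p + 1" using 3 sw_v1[of p n j] r_def N_def by simp
    have b: "sw n i p = p" using 3 c M2 r ii by (intro S) (auto simp: r_def split: if_splits)
    have d: "sw n i (p+1) = p + 1" using 3 c M1 r ii by (intro S) (auto simp: r_def split: if_splits)
    show ?thesis using a b d by simp
  next
    case 4
    have a: "sw n j p = p - 1" using 4 sw_v2[OF n2, of p j] N_def by simp
    have b: "sw n i p = p" using 4 c M2 r ii by (intro S) (auto simp: r_def split: if_splits)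
    have d: "sw n i (p - 1) = p - 1" using 4 c M2 M4 r ii by (intro S) (auto simp: r_def split: if_splits)
    show ?thesis using a b d by simp
  next
    case 5
    have a: "sw n j p = p" using 5 by (intro S) (auto simp: r_def)
    have b: "sw n i p = p" using 5 by (intro S) (auto simp: r_def)
    show ?thesis using a b by simp
  qed
qed


lemma alg:
  fixes x y z A X Y Z XY XZ YZ XYZ :: real
  assumes nz: "A\<noteq>0" "X\<noteq>0" "Y\<noteq>0" "Z\<noteq>0" "XY\<noteq>0" "XZ\<noteq>0" "YZ\<noteq>0" "XYZ\<noteq>0"
    and E: "(x-y)*Z*XY + (y-z)*X*YZ + (z-x)*Y*XZ = 0"
  defines "A1 \<equiv> (y-x)*A*XY/(Y*X)" and "A2 \<equiv> (z-y)*X*XYZ/(XZ*XY)" and "B1 \<equiv> (z-x)*Y*XYZ/(YZ*XY)"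
    and "B2 \<equiv> (z-x)*A*XZ/(X*Z)" and "C1 \<equiv> (z-y)*A*YZ/(Z*Y)" and "C2 \<equiv> (y-x)*Z*XYZ/(XZ*YZ)"
  shows "A1 + C1 = B2" "A2 + C2 = B1"
    "A1 + C1 \<noteq> 0 \<Longrightarrow> A2 = B1*C1/(A1+C1)" "A1 + C1 \<noteq> 0 \<Longrightarrow> C2 = A1*B1/(A1+C1)"
    "A2 + C2 \<noteq> 0 \<Longrightarrow> A1 = B2*C2/(A2+C2)" "A2 + C2 \<noteq> 0 \<Longrightarrow> C1 = A2*B2/(A2+C2)"
proof -
  have E': "(y-x)*Z*XY + (z-y)*X*YZ = (z-x)*Y*XZ" using E by (simp add: algebra_simps)
  have e1: "A1 + C1 = A * ((y-x)*Z*XY + (z-y)*X*YZ) / (X*Y*Z)"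
    unfolding A1_def C1_def using nz by (simp add: field_simps)
  show s1: "A1 + C1 = B2" unfolding e1 E' B2_def using nz by (simp add: field_simps)
  have e2: "A2 + C2 = XYZ * ((y-x)*Z*XY + (z-y)*X*YZ) / (XZ*XY*YZ)"
    unfolding A2_def C2_def using nz by (simp add: field_simps)
  show s2: "A2 + C2 = B1" unfolding e2 E' B1_def using nz by (simp add: field_simps)
  show "A1 + C1 \<noteq> 0 \<Longrightarrow> A2 = B1*C1/(A1+C1)"
  proof -
    assume h: "A1 + C1 \<noteq> 0"
    hence "z - x \<noteq> 0" using s1 B2_def by auto
    hence "A2 = B1*C1/B2" unfolding A2_def B1_def C1_def B2_def using nz by (simp add: field_simps)
    thus ?thesis using s1 by simp
  qed
  show "A1 + C1 \<noteq> 0 \<Longrightarrow> C2 = A1*B1/(A1+C1)"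
  proof -
    assume h: "A1 + C1 \<noteq> 0"
    hence "z - x \<noteq> 0" using s1 B2_def by auto
    hence "C2 = A1*B1/B2" unfolding C2_def B1_def A1_def B2_def using nz by (simp add: field_simps)
    thus ?thesis using s1 by simp
  qed
  show "A2 + C2 \<noteq> 0 \<Longrightarrow> A1 = B2*C2/(A2+C2)"
  proof -
    assume h: "A2 + C2 \<noteq> 0"
    hence "z - x \<noteq> 0" using s2 B1_def by auto
    hence "A1 = B2*C2/B1" unfolding C2_def B1_def A1_def B2_def using nz by (simp add: field_simps)
    thus ?thesis using s2 by simp
  qed
  show "A2 + C2 \<noteq> 0 \<Longrightarrow> C1 = A2*B2/(A2+C2)"
  proof -
    assume h: "A2 + C2 \<noteq> 0"
    hence "z - x \<noteq> 0" using s2 B1_def by auto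
    hence "C1 = A2*B2/B1" unfolding C1_def B1_def A2_def B2_def using nz by (simp add: field_simps)
    thus ?thesis using s2 by simp
  qed
qed


definition aperm :: "nat \<Rightarrow> (int \<Rightarrow> int) \<Rightarrow> bool" where
  "aperm n f \<longleftrightarrow> inj f \<and> (\<forall>p. f (p + int n) = f p + int n)"

lemma aperm_id: "aperm n id" by (simp add: aperm_def)

lemma aperm_sw: "n \<ge> 2 \<Longrightarrow> aperm n (sw n i)"
  unfolding aperm_def
  by (metis injI sw_sw sw_shift)

lemma aperm_comp: "aperm n f \<Longrightarrow> aperm n g \<Longrightarrow> aperm n (f \<circ> g)"
  unfolding aperm_def by (simp add: inj_compose)

lemma aperm_mult:
  assumes "aperm n f" shows "f (p + int n * c) = f p + int n * c"
proof (induction c rule: int_induct[where k=0])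
  case base then show ?case by simp
next
  case (step1 i)
  have "f (p + int n * (i + 1)) = f ((p + int n * i) + int n)" by (simp add: algebra_simps)
  also have "\<dots> = f (p + int n * i) + int n" using assms by (simp add: aperm_def)
  finally show ?case using step1 by (simp add: algebra_simps)
next
  case (step2 i)
  have "f (p + int n * i) = f ((p + int n * (i - 1)) + int n)" by (simp add: algebra_simps)
  also have "\<dots> = f (p + int n * (i - 1)) + int n" using assms by (simp add: aperm_def)
  finally show ?case using step2 by (simp add: algebra_simps)
qed

lemma aperm_res:
  assumes n: "n > 0" and f: "aperm n f" and e: "f q mod int n = f p mod int n"
  shows "q mod int n = p mod int n"
proof -
  define N where "N = int n"
  have N: "N > 0" using n N_def by simp
  define d where "d = (p - q) div N"
  define r where "r = (p - q) mod N"
  have pq: "p = (q + r) + N * d" unfolding d_def r_def by simp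
  have r: "0 \<le> r" "r < N" using N r_def by auto
  have "f p = f (q + r) + N * d" using aperm_mult[OF f, of "q + r" d] pq N_def by simp
  hence "f (q + r) mod N = f q mod N" using e N_def by (metis mod_mult_self2)
  hence "N dvd f (q + r) - f q" by (simp add: mod_eq_dvd_iff)
  then obtain c where "f (q + r) - f q = N * c" by (elim dvdE)
  hence c: "f (q + r) = f q + N * c" by simp
  hence "f (q + r) = f (q + N * c)" using aperm_mult[OF f, of q c] N_def by simp
  hence "q + r = q + N * c" using f unfolding aperm_def by (meson injD)
  hence "r = N * c" by simp
  have c0: "c \<ge> 0" using r N \<open>r = N * c\<close> by (simp add: zero_le_mult_iff)
  have c1: "c < 1" using r N \<open>r = N * c\<close> mult_less_cancel_left_pos[of N c 1] by simp
  have "c = 0" using c0 c1 by simp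
  hence "r = 0" using \<open>r = N * c\<close> by simp
  thus ?thesis using pq N_def by simp
qed

lemma aperm_le:
  assumes n: "n > 0" and f: "aperm n f" and e: "f q mod int n = f p mod int n" and qp: "q < p"
  shows "f q \<le> f p - int n"
proof -
  have "q mod int n = p mod int n" using aperm_res[OF n f e] .
  hence "int n dvd p - q" by (simp add: mod_eq_dvd_iff dvd_diff_commute)
  then obtain c where "p - q = int n * c" by (elim dvdE)
  hence c: "p = q + int n * c" by simp
  have "int n * c > 0" using qp c by simp
  hence "c > 0" using n by (simp add: zero_less_mult_iff)
  hence "c \<ge> 1" by simp
  have "f p = f q + int n * c" using aperm_mult[OF f, of q c] c by simp
  moreover have "int n * c \<ge> int n" using \<open>c \<ge> 1\<close> n by simp
  ultimately show ?thesis by simp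
qed

lemma resid_range: assumes "n > 0" shows "resid n b \<in> {1..n}"
proof -
  have "0 \<le> b mod int n" "b mod int n < int n" using assms by auto
  then show ?thesis unfolding resid_def by (cases "b mod int n = 0") (auto simp del: pos_mod_bound pos_mod_sign)
qed

lemma resid_eq: assumes "n > 0" shows "resid n b = resid n c \<longleftrightarrow> b mod int n = c mod int n"
proof -
  have "0 \<le> b mod int n" "b mod int n < int n" "0 \<le> c mod int n" "c mod int n < int n" using assms by auto
  then show ?thesis unfolding resid_def
    by (cases "b mod int n = 0"; cases "c mod int n = 0") (auto simp del: pos_mod_bound pos_mod_sign)
qed
definition chl :: "nat \<Rightarrow> (int \<Rightarrow> int) \<Rightarrow> int \<Rightarrow> nat \<Rightarrow> int" where
  "chl n f p = chamber_label n {f q | q. q < p}"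

lemma chl_zvec: "chl n f p \<in> zvec n"
  by (simp add: chl_def chamber_label_def zvec_def)

lemma chl_step:
  assumes n: "n > 0" and f: "aperm n f"
  shows "chl n f (p + 1) = vadd (chl n f p) (uvec (resid n (f p)))"
proof (rule ext)
  fix r
  show "chl n f (p + 1) r = vadd (chl n f p) (uvec (resid n (f p))) r"
  proof (cases "r \<in> {1..n}")
    case False
    thus ?thesis using resid_range[OF n, of "f p"]
      by (auto simp: chl_def chamber_label_def vadd_def uvec_def)
  next
    case True
    show ?thesis
    proof (cases "r = resid n (f p)")
      case False
      have "(\<lambda>b. b \<in> {f q |q. q < p + 1} \<and> resid n b = r) = (\<lambda>b. b \<in> {f q |q. q < p} \<and> resid n b = r)"
      proof (rule ext)
        fix b
        show "(b \<in> {f q |q. q < p + 1} \<and> resid n b = r) = (b \<in> {f q |q. q < p} \<and> resid n b = r)"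
        proof -
          have e: "q < p + 1 \<longleftrightarrow> q < p \<or> q = p" for q :: int by auto
          show ?thesis using False by (auto simp: e) (metis le_less)
        qed
      qed
      thus ?thesis using True False by (simp add: chl_def chamber_label_def vadd_def uvec_def)
    next
      case rr: True
      have g1: "(GREATEST b. b \<in> {f q |q. q < p + 1} \<and> resid n b = r) = f p"
      proof (rule Greatest_equality)
        show "f p \<in> {f q |q. q < p + 1} \<and> resid n (f p) = r" using rr by auto
        fix y assume "y \<in> {f q |q. q < p + 1} \<and> resid n y = r"
        then obtain q where q: "y = f q" "q < p + 1" "resid n y = r" by auto
        show "y \<le> f p"
        proof (cases "q = p")
          case True thus ?thesis using q by simp
        next
          case False
          hence "q < p" using q by simp
          moreover have "f q mod int n = f p mod int n" using q rr resid_eq[OF n] by simp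
          ultimately show ?thesis using aperm_le[OF n f] q by fastforce
        qed
      qed
      have fm: "f (p - int n) = f p - int n" using aperm_mult[OF f, of p "-1"] by simp
      have g2: "(GREATEST b. b \<in> {f q |q. q < p} \<and> resid n b = r) = f p - int n"
      proof (rule Greatest_equality)
        have "resid n (f p - int n) = resid n (f p)" using resid_eq[OF n] by simp
        thus "f p - int n \<in> {f q |q. q < p} \<and> resid n (f p - int n) = r" using rr fm n
          by (auto intro!: exI[of _ "p - int n"])
        fix y assume "y \<in> {f q |q. q < p} \<and> resid n y = r"
        then obtain q where q: "y = f q" "q < p" "resid n y = r" by auto
        have "f q mod int n = f p mod int n" using q rr resid_eq[OF n] by simp
        thus "y \<le> f p - int n" using aperm_le[OF n f] q by simp
      qed
      have c: "\<lceil>real_of_int (f p) / real n\<rceil> = \<lceil>real_of_int (f p - int n) / real n\<rceil> + 1"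
      proof -
        have "real_of_int (f p - int n) / real n = real_of_int (f p) / real n - 1" using n by (simp add: field_simps)
        thus ?thesis by simp
      qed
      show ?thesis using True rr g1 g2 c by (simp add: chl_def chamber_label_def vadd_def uvec_def)
    qed
  qed
qed

lemma chl_sw:
  assumes n: "n \<ge> 2" and h: "(p - 1) mod int n \<noteq> int i"
  shows "chl n (f \<circ> sw n i) p = chl n f p"
proof -
  have lt: "sw n i q < p" if "q < p" for q
    using that h unfolding sw_def by (cases "q = p - 1") (auto split: if_splits)
  have "{(f \<circ> sw n i) q | q. q < p} = {f q | q. q < p}"
  proof
    show "{(f \<circ> sw n i) q | q. q < p} \<subseteq> {f q | q. q < p}" using lt by auto
    show "{f q | q. q < p} \<subseteq> {(f \<circ> sw n i) q | q. q < p}"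
    proof
      fix b assume "b \<in> {f q | q. q < p}"
      then obtain q where q: "b = f q" "q < p" by auto
      hence "b = (f \<circ> sw n i) (sw n i q)" using sw_sw[OF n] by simp
      thus "b \<in> {(f \<circ> sw n i) q | q. q < p}" using lt[OF q(2)] by blast
    qed
  qed
  thus ?thesis by (simp add: chl_def)
qed


definition Wt :: "(nat \<Rightarrow> real) \<Rightarrow> ((nat \<Rightarrow> int) \<Rightarrow> real) \<Rightarrow> nat \<Rightarrow> nat \<Rightarrow> (nat \<Rightarrow> int) \<Rightarrow> real" where
  "Wt \<alpha> \<tau> i j s = (\<alpha> i - \<alpha> j) * \<tau> s * \<tau> (vadd (vadd s (uvec i)) (uvec j))
         / (\<tau> (vadd s (uvec i)) * \<tau> (vadd s (uvec j)))"

definition CW :: "nat \<Rightarrow> (nat \<Rightarrow> real) \<Rightarrow> ((nat \<Rightarrow> int) \<Rightarrow> real) \<Rightarrow> (int \<Rightarrow> int) \<Rightarrow> int \<Rightarrow> real" where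
  "CW n \<alpha> \<tau> g p = Wt \<alpha> \<tau> (resid n (g (p+1))) (resid n (g p)) (chl n g p)"

lemma cw_eq: "crossing_weight n \<alpha> \<tau> L t p = CW n \<alpha> \<tau> (L t) p"
  by (simp add: crossing_weight_def CW_def Wt_def chl_def Let_def)

lemma zvec_vadd: "s \<in> zvec n \<Longrightarrow> r \<in> {1..n} \<Longrightarrow> vadd s (uvec r) \<in> zvec n"
  by (auto simp: zvec_def vadd_def uvec_def)

lemma vadd_swap: "vadd (vadd s a) b = vadd (vadd s b) a"
  by (auto simp: vadd_def)

lemma braid_facts:
  assumes n: "n \<ge> 3" and u: "u < n" "v < n" and mu: "m mod int n = int u" and mv: "(m+1) mod int n = int v"
  shows "sw n u m = m + 1" "sw n u (m+1) = m" "sw n u (m+2) = m + 2"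
    "sw n v m = m" "sw n v (m+1) = m + 2" "sw n v (m+2) = m + 1"
    "(m - 1) mod int n \<noteq> int u" "(m - 1) mod int n \<noteq> int v"
    "(m+2) mod int n \<noteq> int u" "u \<noteq> v" "(m + 2) mod int n \<noteq> int v"
proof -
  define N where "N = int n"
  have N: "N \<ge> 3" using n N_def by simp
  have n2: "n \<ge> 2" using n by simp
  have ii: "0 \<le> int u" "int u < N" "0 \<le> int v" "int v < N" using u N_def by auto
  have M1: "(m+1) mod N = (if int u = N - 1 then 0 else int u + 1)" using modp1[of N m] N mu N_def by simp
  have M2: "(m-1) mod N = (if int u = 0 then N - 1 else int u - 1)" using modm1[of N m] N mu N_def by simp
  have M3: "(m+2) mod N = (if int u = N - 1 then 1 else if int u = N - 2 then 0 else int u + 2)" using modp2[of N m] N mu N_def by simp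
  have vv: "int v = (if int u = N - 1 then 0 else int u + 1)" using M1 mv N_def by simp
  show "sw n u m = m + 1" using sw_v1[of m n u] mu by simp
  show "sw n u (m+1) = m" using sw_v2[OF n2, of "m+1" u] mu by simp
  show a: "(m+2) mod int n \<noteq> int u" using M3 N ii N_def by (auto split: if_splits)
  show b: "(m+2) mod int n \<noteq> int v" using M3 vv N ii N_def by (auto split: if_splits)
  show c: "(m - 1) mod int n \<noteq> int u" using M2 N ii N_def by (auto split: if_splits)
  show d: "(m - 1) mod int n \<noteq> int v" using M2 vv N ii N_def by (auto split: if_splits)
  show e: "u \<noteq> v" using vv N ii by (auto split: if_splits)
  have "(m + 2 - 1) = m + 1" by simp
  thus "sw n u (m+2) = m + 2" using sw_v3[of "m+2" n u] a mv e by (simp add: add.commute)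
  show "sw n v m = m" using sw_v3[of m n v] mu e d by simp
  show "sw n v (m+1) = m + 2" using sw_v1[of "m+1" n v] mv by simp
  show "sw n v (m+2) = m + 1" using sw_v2[OF n2, of "m+2" v] mv by (simp add: add.commute)
qed

lemma res_distinct:
  assumes n: "n \<ge> 3" and f: "aperm n f"
  shows "resid n (f m) \<noteq> resid n (f (m+1))" "resid n (f (m+1)) \<noteq> resid n (f (m+2))"
    "resid n (f m) \<noteq> resid n (f (m+2))"
proof -
  define N where "N = int n"
  have N: "N \<ge> 3" using n N_def by simp
  have n0: "n > 0" using n by simp
  have r: "0 \<le> m mod N" "m mod N < N" using N by auto
  have M1: "(m+1) mod N = (if m mod N = N - 1 then 0 else m mod N + 1)" using modp1[of N m] N by simp
  have M3: "(m+2) mod N = (if m mod N = N - 1 then 1 else if m mod N = N - 2 then 0 else m mod N + 2)" using modp2[of N m] N by simp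
  have R: "resid n (f a) = resid n (f b) \<Longrightarrow> a mod N = b mod N" for a b
    using resid_eq[OF n0] aperm_res[OF n0 f] N_def by metis
  have "m mod N \<noteq> (m+1) mod N" using M1 r N by (auto split: if_splits)
  thus "resid n (f m) \<noteq> resid n (f (m+1))" using R by blast
  have "(m+1) mod N \<noteq> (m+2) mod N" using M1 M3 r N by (auto split: if_splits)
  thus "resid n (f (m+1)) \<noteq> resid n (f (m+2))" using R by blast
  have "m mod N \<noteq> (m+2) mod N" using M3 r N by (auto split: if_splits)
  thus "resid n (f m) \<noteq> resid n (f (m+2))" using R by blast
qed


lemma braid_vals:
  assumes n: "n \<ge> 3" and f: "aperm n f" and u: "u < n" "v < n" and mu: "m mod int n = int u" and mv: "(m+1) mod int n = int v"
  defines "rx \<equiv> resid n (f m)" and "ry \<equiv> resid n (f (m+1))" and "rz \<equiv> resid n (f (m+2))" and "s \<equiv> chl n f m"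
  shows "CW n \<alpha> \<tau> f m = Wt \<alpha> \<tau> ry rx s"
    "CW n \<alpha> \<tau> f (m+1) = Wt \<alpha> \<tau> rz ry (vadd s (uvec rx))"
    "CW n \<alpha> \<tau> (f \<circ> sw n u) (m+1) = Wt \<alpha> \<tau> rz rx (vadd s (uvec ry))"
    "CW n \<alpha> \<tau> (f \<circ> sw n v) m = Wt \<alpha> \<tau> rz rx s"
    "CW n \<alpha> \<tau> (f \<circ> sw n u \<circ> sw n v) m = Wt \<alpha> \<tau> rz ry s"
    "CW n \<alpha> \<tau> (f \<circ> sw n v \<circ> sw n u) (m+1) = Wt \<alpha> \<tau> ry rx (vadd s (uvec rz))"
proof -
  note B = braid_facts[OF n u mu mv]
  have n2: "n \<ge> 2" and n0: "n > 0" using n by auto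
  have ap: "aperm n (f \<circ> sw n a)" "aperm n (f \<circ> sw n a \<circ> sw n b)" for a b
    using aperm_comp aperm_sw[OF n2] f by blast+
  have st: "chl n g (m + 1) = vadd (chl n g m) (uvec (resid n (g m)))" if "aperm n g" for g
    using chl_step[OF n0 that] .
  have c1: "chl n (f \<circ> sw n u) m = s" using chl_sw[OF n2 B(7)] s_def by simp
  have c2: "chl n (f \<circ> sw n v) m = s" using chl_sw[OF n2 B(8)] s_def by simp
  have c3: "chl n (f \<circ> sw n u \<circ> sw n v) m = s" using chl_sw[OF n2 B(8), of "f \<circ> sw n u"] c1 by simp
  have c4: "chl n (f \<circ> sw n v \<circ> sw n u) m = s" using chl_sw[OF n2 B(7), of "f \<circ> sw n v"] c2 by simp
  have m2: "m + 1 + 1 = m + 2" by simp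
  show "CW n \<alpha> \<tau> f m = Wt \<alpha> \<tau> ry rx s" unfolding CW_def rx_def ry_def s_def by simp
  show "CW n \<alpha> \<tau> f (m+1) = Wt \<alpha> \<tau> rz ry (vadd s (uvec rx))"
    unfolding CW_def rx_def ry_def rz_def s_def using st[OF f] m2 by (simp add: add.commute)
  show "CW n \<alpha> \<tau> (f \<circ> sw n u) (m+1) = Wt \<alpha> \<tau> rz rx (vadd s (uvec ry))"
    unfolding CW_def rx_def ry_def rz_def using st[OF ap(1)] c1 B m2 by (simp add: add.commute)
  show "CW n \<alpha> \<tau> (f \<circ> sw n v) m = Wt \<alpha> \<tau> rz rx s"
    unfolding CW_def rx_def ry_def rz_def using c2 B by simp
  show "CW n \<alpha> \<tau> (f \<circ> sw n u \<circ> sw n v) m = Wt \<alpha> \<tau> rz ry s"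
    unfolding CW_def rx_def ry_def rz_def using c3 B by simp
  show "CW n \<alpha> \<tau> (f \<circ> sw n v \<circ> sw n u) (m+1) = Wt \<alpha> \<tau> ry rx (vadd s (uvec rz))"
    unfolding CW_def rx_def ry_def rz_def using st[OF ap(2)] c4 B m2 by (simp add: add.commute)
qed

lemma braid_rel:
  assumes n: "n \<ge> 3" and f: "aperm n f" and u: "u < n" "v < n" and mu: "m mod int n = int u" and mv: "(m+1) mod int n = int v"
    and bhz: "BHZ n \<alpha> \<tau>" and nz: "\<forall>s\<in>zvec n. \<tau> s \<noteq> 0"
  defines "A1 \<equiv> CW n \<alpha> \<tau> f m" and "A2 \<equiv> CW n \<alpha> \<tau> f (m+1)"
    and "B1 \<equiv> CW n \<alpha> \<tau> (f \<circ> sw n u) (m+1)" and "B2 \<equiv> CW n \<alpha> \<tau> (f \<circ> sw n v) m"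
    and "C1 \<equiv> CW n \<alpha> \<tau> (f \<circ> sw n u \<circ> sw n v) m" and "C2 \<equiv> CW n \<alpha> \<tau> (f \<circ> sw n v \<circ> sw n u) (m+1)"
  shows "A1 + C1 = B2" "A2 + C2 = B1"
    "A1 + C1 \<noteq> 0 \<Longrightarrow> A2 = B1*C1/(A1+C1)" "A1 + C1 \<noteq> 0 \<Longrightarrow> C2 = A1*B1/(A1+C1)"
    "A2 + C2 \<noteq> 0 \<Longrightarrow> A1 = B2*C2/(A2+C2)" "A2 + C2 \<noteq> 0 \<Longrightarrow> C1 = A2*B2/(A2+C2)"
proof -
  define rx where "rx = resid n (f m)"
  define ry where "ry = resid n (f (m+1))"
  define rz where "rz = resid n (f (m+2))"
  define s where "s = chl n f m"
  note V = braid_vals[OF n f u mu mv, of \<alpha> \<tau>, folded rx_def ry_def rz_def s_def]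
  have n0: "n > 0" using n by simp
  have d: "rx \<noteq> ry" "ry \<noteq> rz" "rx \<noteq> rz" using res_distinct[OF n f, of m] rx_def ry_def rz_def by auto
  have rr: "rx \<in> {1..n}" "ry \<in> {1..n}" "rz \<in> {1..n}" using resid_range[OF n0] rx_def ry_def rz_def by auto
  have sz: "s \<in> zvec n" using chl_zvec s_def by simp
  let ?ex = "uvec rx" and ?ey = "uvec ry" and ?ez = "uvec rz"
  define A where "A = \<tau> s"
  define X where "X = \<tau> (vadd s ?ex)"
  define Y where "Y = \<tau> (vadd s ?ey)"
  define Z where "Z = \<tau> (vadd s ?ez)"
  define XY where "XY = \<tau> (vadd (vadd s ?ex) ?ey)"
  define XZ where "XZ = \<tau> (vadd (vadd s ?ex) ?ez)"
  define YZ where "YZ = \<tau> (vadd (vadd s ?ey) ?ez)"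
  define XYZ where "XYZ = \<tau> (vadd (vadd (vadd s ?ex) ?ey) ?ez)"
  have zz: "vadd s ?ex \<in> zvec n" "vadd s ?ey \<in> zvec n" "vadd s ?ez \<in> zvec n"
    "vadd (vadd s ?ex) ?ey \<in> zvec n" "vadd (vadd s ?ex) ?ez \<in> zvec n" "vadd (vadd s ?ey) ?ez \<in> zvec n"
    "vadd (vadd (vadd s ?ex) ?ey) ?ez \<in> zvec n"
    using zvec_vadd sz rr by blast+
  have nzs: "A\<noteq>0" "X\<noteq>0" "Y\<noteq>0" "Z\<noteq>0" "XY\<noteq>0" "XZ\<noteq>0" "YZ\<noteq>0" "XYZ\<noteq>0"
    unfolding A_def X_def Y_def Z_def XY_def XZ_def YZ_def XYZ_def using nz zz sz by auto
  have E: "(\<alpha> rx - \<alpha> ry)*Z*XY + (\<alpha> ry - \<alpha> rz)*X*YZ + (\<alpha> rz - \<alpha> rx)*Y*XZ = 0"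
  proof -
    have "rx \<noteq> ry \<and> ry \<noteq> rz \<and> rx \<noteq> rz" using d by simp
    thus ?thesis using bhz[unfolded BHZ_def, rule_format, OF sz rr(1) rr(2) rr(3)]
      unfolding Z_def XY_def X_def YZ_def Y_def XZ_def by simp
  qed
  have sw1: "vadd (vadd s a) b = vadd (vadd s b) a" for a b using vadd_swap .
  have e3: "vadd (vadd (vadd s a) b) c = vadd (vadd (vadd s a) c) b" for a b c using vadd_swap .
  have eA1: "A1 = (\<alpha> ry - \<alpha> rx)*A*XY/(Y*X)" unfolding A1_def V(1) Wt_def A_def XY_def Y_def X_def
    by (simp add: vadd_def ac_simps)
  have eA2: "A2 = (\<alpha> rz - \<alpha> ry)*X*XYZ/(XZ*XY)" unfolding A2_def V(2) Wt_def X_def XYZ_def XZ_def XY_def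
    by (simp add: vadd_def ac_simps)
  have eB1: "B1 = (\<alpha> rz - \<alpha> rx)*Y*XYZ/(YZ*XY)" unfolding B1_def V(3) Wt_def Y_def XYZ_def YZ_def XY_def
    by (simp add: vadd_def ac_simps)
  have eB2: "B2 = (\<alpha> rz - \<alpha> rx)*A*XZ/(X*Z)" unfolding B2_def V(4) Wt_def A_def XZ_def X_def Z_def
    by (simp add: vadd_def ac_simps)
  have eC1: "C1 = (\<alpha> rz - \<alpha> ry)*A*YZ/(Z*Y)" unfolding C1_def V(5) Wt_def A_def YZ_def Z_def Y_def
    by (simp add: vadd_def ac_simps)
  have eC2: "C2 = (\<alpha> ry - \<alpha> rx)*Z*XYZ/(XZ*YZ)" unfolding C2_def V(6) Wt_def Z_def XYZ_def XZ_def YZ_def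
    by (simp add: vadd_def ac_simps)
  note R = alg[OF nzs E]
  show "A1 + C1 = B2" unfolding eA1 eC1 eB2 by (rule R(1))
  show "A2 + C2 = B1" unfolding eA2 eC2 eB1 by (rule R(2))
  show "A1 + C1 \<noteq> 0 \<Longrightarrow> A2 = B1*C1/(A1+C1)" unfolding eA1 eA2 eB1 eC1 by (rule R(3))
  show "A1 + C1 \<noteq> 0 \<Longrightarrow> C2 = A1*B1/(A1+C1)" unfolding eA1 eC2 eB1 eC1 by (rule R(4))
  show "A2 + C2 \<noteq> 0 \<Longrightarrow> A1 = B2*C2/(A2+C2)" unfolding eA1 eA2 eB2 eC2 by (rule R(5))
  show "A2 + C2 \<noteq> 0 \<Longrightarrow> C1 = A2*B2/(A2+C2)" unfolding eA2 eC1 eB2 eC2 by (rule R(6))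
qed


lemma cons_fwd: "labels_consistent n w L \<Longrightarrow> L (t+1) = L t \<circ> sw n (w t)"
  by (simp add: labels_consistent_def)

lemma cons_back: "n \<ge> 2 \<Longrightarrow> labels_consistent n w L \<Longrightarrow> L t = L (t+1) \<circ> sw n (w t)"
  by (rule ext) (simp add: labels_consistent_def sw_sw)

lemma prop_aperm:
  assumes n: "n \<ge> 2" and c: "labels_consistent n w L" and a: "aperm n (L t0)"
  shows "aperm n (L t)"
proof (induction t rule: int_induct[where k=t0])
  case base then show ?case using a .
next
  case (step1 i)
  then show ?case using cons_fwd[OF c, of i] aperm_comp aperm_sw[OF n] by metis
next
  case (step2 i)
  have "L (i - 1) = L (i - 1 + 1) \<circ> sw n (w (i - 1))" using cons_back[OF n c] .
  then show ?case using step2 aperm_comp[OF _ aperm_sw[OF n]] by (metis diff_add_cancel)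
qed

lemma agree_fwd:
  assumes c: "labels_consistent n w L" and c': "labels_consistent n w' L'" and e: "L' t0 = L t0"
    and ww: "\<forall>t\<ge>t0. w' t = w t" and t: "t \<ge> t0"
  shows "L' t = L t"
  using t
proof (induction t rule: int_ge_induct)
  case base then show ?case using e .
next
  case (step i)
  then show ?case using cons_fwd[OF c, of i] cons_fwd[OF c', of i] ww by simp
qed

lemma agree_bwd:
  assumes n: "n \<ge> 2" and c: "labels_consistent n w L" and c': "labels_consistent n w' L'" and e: "L' t0 = L t0"
    and ww: "\<forall>t<t0. w' t = w t" and t: "t \<le> t0"
  shows "L' t = L t"
  using t
proof (induction t rule: int_le_induct)
  case base then show ?case using e .
next
  case (step i)
  have "L (i - 1) = L (i - 1 + 1) \<circ> sw n (w (i - 1))" using cons_back[OF n c] .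
  moreover have "L' (i - 1) = L' (i - 1 + 1) \<circ> sw n (w' (i - 1))" using cons_back[OF n c'] .
  moreover have "w' (i - 1) = w (i - 1)" using ww step by simp
  ultimately show ?case using step by simp
qed

lemma comm_sym: "n \<ge> 3 \<Longrightarrow> i < n \<Longrightarrow> j < n \<Longrightarrow> commuting_letters n i j \<Longrightarrow> commuting_letters n j i"
  by (simp add: comm_lin)

lemma adj_orient: "n \<ge> 3 \<Longrightarrow> i < n \<Longrightarrow> j < n \<Longrightarrow> adjacent_letters n i j \<Longrightarrow>
   int j = (if int i = int n - 1 then 0 else int i + 1) \<or> int i = (if int j = int n - 1 then 0 else int j + 1)"
  by (auto simp: adj_lin)

lemma succ_res:
  assumes n: "n \<ge> 3" and uv: "int v = (if int u = int n - 1 then 0 else int u + 1)" and u: "u < n"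
  shows "m mod int n = int u \<Longrightarrow> (m + 1) mod int n = int v"
    "p mod int n = int v \<Longrightarrow> (p - 1) mod int n = int u"
proof -
  have N: "int n > 1" using n by simp
  show "m mod int n = int u \<Longrightarrow> (m + 1) mod int n = int v" using modp1[OF N, of m] uv by simp
  show "p mod int n = int v \<Longrightarrow> (p - 1) mod int n = int u" using modm1[OF N, of p] uv u
    by (auto split: if_splits)
qed

lemma cw_comm:
  assumes n: "n \<ge> 3" and f: "aperm n f" and ij: "i < n" "j < n" and cm: "commuting_letters n i j"
    and p: "p mod int n = int j"
  shows "CW n \<alpha> \<tau> (f \<circ> sw n i) p = CW n \<alpha> \<tau> f p"
proof -
  define N where "N = int n"
  have N: "N \<ge> 3" using n N_def by simp
  have n2: "n \<ge> 2" using n by simp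
  have ii: "0 \<le> int i" "int i < N" "0 \<le> int j" "int j < N" using ij N_def by auto
  have c: "\<not>(int i - int j = 0 \<or> int i - int j = 1 \<or> int i - int j = 1 - N \<or> int i - int j = -1 \<or> int i - int j = N - 1)"
    using cm ij n N_def by (simp add: comm_lin)
  have M1: "(p+1) mod N = (if int j = N - 1 then 0 else int j + 1)" using modp1[of N p] N p N_def by simp
  have M2: "(p-1) mod N = (if int j = 0 then N - 1 else int j - 1)" using modm1[of N p] N p N_def by simp
  have h1: "(p - 1) mod int n \<noteq> int i" using M2 c ii N_def by (auto split: if_splits)
  have h2: "(p + 1) mod int n \<noteq> int i" using M1 c ii N_def by (auto split: if_splits)
  have h3: "p mod int n \<noteq> int i" using p c by auto
  have s1: "sw n i p = p" using sw_v3[OF h3 h1] .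
  have s2: "sw n i (p+1) = p + 1" using sw_v3[of "p+1" n i] h2 h3 by simp
  have cc: "chl n (f \<circ> sw n i) p = chl n f p" using chl_sw[OF n2 h1] .
  show ?thesis unfolding CW_def using s1 s2 cc by simp
qed


definition Inv :: "nat \<Rightarrow> (nat \<Rightarrow> real) \<Rightarrow> ((nat \<Rightarrow> int) \<Rightarrow> real) \<Rightarrow> (int \<Rightarrow> nat) \<times> (int \<Rightarrow> real) \<times> (int \<Rightarrow> int \<Rightarrow> int) \<Rightarrow> bool" where
  "Inv n \<alpha> \<tau> C = (case C of (w, a, L) \<Rightarrow>
     (\<forall>t. w t < n) \<and> labels_consistent n w L \<and> (\<forall>t. aperm n (L t)) \<and> weights_given n \<alpha> \<tau> w a L)"

lemma wg_iff: "weights_given n \<alpha> \<tau> w a L \<longleftrightarrow> (\<forall>t p. p mod int n = int (w t) \<longrightarrow> a t = CW n \<alpha> \<tau> (L t) p)"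
  by (simp add: weights_given_def cw_eq)

lemma step_comm:
  assumes n: "n \<ge> 3" and wlt: "\<forall>t. w t < n" and c: "labels_consistent n w L" and ap: "\<forall>t. aperm n (L t)"
    and wg: "weights_given n \<alpha> \<tau> w a L" and c': "labels_consistent n w' L'" and Lk: "L' k = L k"
    and cm: "commuting_letters n (w k) (w (k + 1))"
    and w': "w' = w(k := w (k + 1), k + 1 := w k)" and a': "a' = a(k := a (k + 1), k + 1 := a k)"
  shows "weights_given n \<alpha> \<tau> w' a' L'"
proof -
  have n2: "n \<ge> 2" using n by simp
  define i where "i = w k"
  define j where "j = w (k+1)"
  have ij: "i < n" "j < n" using wlt i_def j_def by auto
  have cm': "commuting_letters n j i" using comm_sym[OF n ij cm[folded i_def j_def]] .
  have W: "\<And>t p. p mod int n = int (w t) \<Longrightarrow> a t = CW n \<alpha> \<tau> (L t) p" using wg by (simp add: wg_iff)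
  have L1: "L (k+1) = L k \<circ> sw n i" using cons_fwd[OF c] i_def by simp
  have L1': "L' (k+1) = L k \<circ> sw n j" using cons_fwd[OF c', of k] Lk w' j_def by simp
  have L2: "L (k+2) = L k \<circ> sw n i \<circ> sw n j" using cons_fwd[OF c, of "k+1"] L1 j_def by (simp add: add.assoc)
  have L2': "L' (k+2) = L (k+2)"
  proof -
    have "L' (k+2) = L k \<circ> sw n j \<circ> sw n i" using cons_fwd[OF c', of "k+1"] L1' w' i_def by (simp add: add.assoc)
    thus ?thesis using L2 sw_comm[OF n ij cm[folded i_def j_def]] by (auto simp: fun_eq_iff)
  qed
  have before: "L' t = L t" if "t \<le> k" for t
    using agree_bwd[OF n2 c c' Lk _ that] w' by auto
  have after: "L' t = L t" if "t \<ge> k + 2" for t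
    using agree_fwd[OF c c' L2' _ that] w' by auto
  show ?thesis unfolding wg_iff
  proof (intro allI impI)
    fix t p assume p: "p mod int n = int (w' t)"
    consider "t = k" | "t = k + 1" | "t < k" | "t > k + 1" by linarith
    then show "a' t = CW n \<alpha> \<tau> (L' t) p"
    proof cases
      case 1
      have pj: "p mod int n = int j" using p 1 w' j_def by simp
      have "a' t = a (k+1)" using 1 a' by simp
      also have "\<dots> = CW n \<alpha> \<tau> (L k \<circ> sw n i) p" using W[of p "k+1"] pj L1 j_def by simp
      also have "\<dots> = CW n \<alpha> \<tau> (L k) p" using cw_comm[OF n _ ij cm[folded i_def j_def] pj] ap by simp
      finally show ?thesis using 1 Lk by simp
    next
      case 2
      have pi: "p mod int n = int i" using p 2 w' i_def by simp
      have "a' t = a k" using 2 a' by simp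
      also have "\<dots> = CW n \<alpha> \<tau> (L k) p" using W[of p k] pi i_def by simp
      also have "\<dots> = CW n \<alpha> \<tau> (L k \<circ> sw n j) p" using cw_comm[OF n _ ij(2) ij(1) cm' pi] ap by simp
      finally show ?thesis using 2 L1' by simp
    next
      case 3
      hence "a' t = a t" "w' t = w t" "L' t = L t" using a' w' before by auto
      thus ?thesis using W p by simp
    next
      case 4
      hence "a' t = a t" "w' t = w t" "L' t = L t" using a' w' after by auto
      thus ?thesis using W p by simp
    qed
  qed
qed


lemma step_braid:
  assumes n: "n \<ge> 3" and wlt: "\<forall>t. w t < n" and c: "labels_consistent n w L" and ap: "\<forall>t. aperm n (L t)"
    and wg: "weights_given n \<alpha> \<tau> w a L" and c': "labels_consistent n w' L'" and Lk: "L' k = L k"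
    and bhz: "BHZ n \<alpha> \<tau>" and nz: "\<forall>s\<in>zvec n. \<tau> s \<noteq> 0"
    and adj: "adjacent_letters n (w k) (w (k + 1))" and w2: "w (k + 2) = w k" and ne: "a k + a (k + 2) \<noteq> 0"
    and w': "w' = w(k := w (k + 1), k + 1 := w k, k + 2 := w (k + 1))"
    and a': "a' = a(k := a (k + 1) * a (k + 2) / (a k + a (k + 2)),
                k + 1 := a k + a (k + 2),
                k + 2 := a k * a (k + 1) / (a k + a (k + 2)))"
  shows "weights_given n \<alpha> \<tau> w' a' L'"
proof -
  have n2: "n \<ge> 2" using n by simp
  define i where "i = w k"
  define j where "j = w (k+1)"
  define f where "f = L k"
  have f: "aperm n f" using ap f_def by simp
  have ij: "i < n" "j < n" using wlt i_def j_def by auto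
  have W: "\<And>t p. p mod int n = int (w t) \<Longrightarrow> a t = CW n \<alpha> \<tau> (L t) p" using wg by (simp add: wg_iff)
  have L1: "L (k+1) = f \<circ> sw n i" using cons_fwd[OF c] i_def f_def by simp
  have L2: "L (k+2) = f \<circ> sw n i \<circ> sw n j" using cons_fwd[OF c, of "k+1"] L1 j_def by (simp add: add.assoc)
  have L3: "L (k+3) = f \<circ> sw n i \<circ> sw n j \<circ> sw n i" using cons_fwd[OF c, of "k+2"] L2 w2 i_def
    by (simp add: add.assoc)
  have L1': "L' (k+1) = f \<circ> sw n j" using cons_fwd[OF c', of k] Lk w' j_def f_def by simp
  have L2': "L' (k+2) = f \<circ> sw n j \<circ> sw n i" using cons_fwd[OF c', of "k+1"] L1' w' i_def by (simp add: add.assoc)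
  have L3': "L' (k+3) = L (k+3)"
  proof -
    have "L' (k+3) = f \<circ> sw n j \<circ> sw n i \<circ> sw n j" using cons_fwd[OF c', of "k+2"] L2' w' j_def
      by (simp add: add.assoc)
    thus ?thesis using L3 sw_braid[OF n ij adj[folded i_def j_def]] by (auto simp: fun_eq_iff)
  qed
  have before: "L' t = L t" if "t \<le> k" for t
    using agree_bwd[OF n2 c c' Lk _ that] w' by auto
  have after: "L' t = L t" if "t \<ge> k + 3" for t
    using agree_fwd[OF c c' L3' _ that] w' by auto
  have ak: "\<And>p. p mod int n = int i \<Longrightarrow> a k = CW n \<alpha> \<tau> f p" using W i_def f_def by simp
  have ak1: "\<And>p. p mod int n = int j \<Longrightarrow> a (k+1) = CW n \<alpha> \<tau> (f \<circ> sw n i) p" using W L1 j_def by simp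
  have ak2: "\<And>p. p mod int n = int i \<Longrightarrow> a (k+2) = CW n \<alpha> \<tau> (f \<circ> sw n i \<circ> sw n j) p"
    using W L2 w2 i_def by simp
  have a'0: "a' k = a (k + 1) * a (k + 2) / (a k + a (k + 2))" using a' by simp
  have a'1: "a' (k+1) = a k + a (k + 2)" using a' by simp
  have a'2: "a' (k+2) = a k * a (k + 1) / (a k + a (k + 2))" using a' by simp
  have w'0: "w' k = j" and w'1: "w' (k+1) = i" and w'2: "w' (k+2) = j" using w' i_def j_def by auto
  have mid: "a' t = CW n \<alpha> \<tau> (L' t) p" if t: "t = k \<or> t = k + 1 \<or> t = k + 2" and p: "p mod int n = int (w' t)" for t p
    using adj_orient[OF n ij adj[folded i_def j_def]]
  proof
    assume o: "int j = (if int i = int n - 1 then 0 else int i + 1)"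
    note S = succ_res[OF n o ij(1)]
    consider "t = k" | "t = k + 1" | "t = k + 2" using t by blast
    then show ?thesis
    proof cases
      case 1
      define m where "m = p - 1"
      have pj: "p mod int n = int j" using p 1 w'0 by simp
      have mi: "m mod int n = int i" using S(2)[OF pj] m_def by simp
      have mj: "(m+1) mod int n = int j" using pj m_def by simp
      note R = braid_rel[OF n f ij mi mj bhz nz]
      have "a k = CW n \<alpha> \<tau> f m" using ak[OF mi] .
      moreover have "a (k+1) = CW n \<alpha> \<tau> (f \<circ> sw n i) (m+1)" using ak1[OF mj] .
      moreover have "a (k+2) = CW n \<alpha> \<tau> (f \<circ> sw n i \<circ> sw n j) m" using ak2[OF mi] .
      ultimately have "a' k = CW n \<alpha> \<tau> f (m+1)" using R(3) ne a'0 by simp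
      thus ?thesis using 1 m_def Lk f_def by simp
    next
      case 2
      have pi: "p mod int n = int i" using p 2 w'1 by simp
      have pj: "(p+1) mod int n = int j" using S(1)[OF pi] .
      note R = braid_rel[OF n f ij pi pj bhz nz]
      have "a k = CW n \<alpha> \<tau> f p" using ak[OF pi] .
      moreover have "a (k+2) = CW n \<alpha> \<tau> (f \<circ> sw n i \<circ> sw n j) p" using ak2[OF pi] .
      ultimately have "a' (k+1) = CW n \<alpha> \<tau> (f \<circ> sw n j) p" using R(1) a'1 by simp
      thus ?thesis using 2 L1' by simp
    next
      case 3
      define m where "m = p - 1"
      have pj: "p mod int n = int j" using p 3 w'2 by simp
      have mi: "m mod int n = int i" using S(2)[OF pj] m_def by simp
      have mj: "(m+1) mod int n = int j" using pj m_def by simp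
      note R = braid_rel[OF n f ij mi mj bhz nz]
      have "a k = CW n \<alpha> \<tau> f m" using ak[OF mi] .
      moreover have "a (k+1) = CW n \<alpha> \<tau> (f \<circ> sw n i) (m+1)" using ak1[OF mj] .
      moreover have "a (k+2) = CW n \<alpha> \<tau> (f \<circ> sw n i \<circ> sw n j) m" using ak2[OF mi] .
      ultimately have "a' (k+2) = CW n \<alpha> \<tau> (f \<circ> sw n j \<circ> sw n i) (m+1)" using R(4) ne a'2 by simp
      thus ?thesis using 3 m_def L2' by simp
    qed
  next
    assume o: "int i = (if int j = int n - 1 then 0 else int j + 1)"
    note S = succ_res[OF n o ij(2)]
    consider "t = k" | "t = k + 1" | "t = k + 2" using t by blast
    then show ?thesis
    proof cases
      case 1
      have pj: "p mod int n = int j" using p 1 w'0 by simp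
      have pi: "(p+1) mod int n = int i" using S(1)[OF pj] .
      note R = braid_rel[OF n f ij(2) ij(1) pj pi bhz nz]
      have "a k = CW n \<alpha> \<tau> f (p+1)" using ak[OF pi] .
      moreover have "a (k+1) = CW n \<alpha> \<tau> (f \<circ> sw n i) p" using ak1[OF pj] .
      moreover have "a (k+2) = CW n \<alpha> \<tau> (f \<circ> sw n i \<circ> sw n j) (p+1)" using ak2[OF pi] .
      ultimately have "a' k = CW n \<alpha> \<tau> f p" using R(5) ne a'0 by simp
      thus ?thesis using 1 Lk f_def by simp
    next
      case 2
      define m where "m = p - 1"
      have pi: "p mod int n = int i" using p 2 w'1 by simp
      have mj: "m mod int n = int j" using S(2)[OF pi] m_def by simp
      have mi: "(m+1) mod int n = int i" using pi m_def by simp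
      note R = braid_rel[OF n f ij(2) ij(1) mj mi bhz nz]
      have "a k = CW n \<alpha> \<tau> f (m+1)" using ak[OF mi] .
      moreover have "a (k+2) = CW n \<alpha> \<tau> (f \<circ> sw n i \<circ> sw n j) (m+1)" using ak2[OF mi] .
      ultimately have "a' (k+1) = CW n \<alpha> \<tau> (f \<circ> sw n j) (m+1)" using R(2) a'1 by simp
      thus ?thesis using 2 m_def L1' by simp
    next
      case 3
      have pj: "p mod int n = int j" using p 3 w'2 by simp
      have pi: "(p+1) mod int n = int i" using S(1)[OF pj] .
      note R = braid_rel[OF n f ij(2) ij(1) pj pi bhz nz]
      have "a k = CW n \<alpha> \<tau> f (p+1)" using ak[OF pi] .
      moreover have "a (k+1) = CW n \<alpha> \<tau> (f \<circ> sw n i) p" using ak1[OF pj] .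
      moreover have "a (k+2) = CW n \<alpha> \<tau> (f \<circ> sw n i \<circ> sw n j) (p+1)" using ak2[OF pi] .
      ultimately have "a' (k+2) = CW n \<alpha> \<tau> (f \<circ> sw n j \<circ> sw n i) p" using R(6) ne a'2 by simp
      thus ?thesis using 3 L2' by simp
    qed
  qed
  show ?thesis unfolding wg_iff
  proof (intro allI impI)
    fix t p assume p: "p mod int n = int (w' t)"
    consider "t = k \<or> t = k + 1 \<or> t = k + 2" | "t < k" | "t > k + 2" by linarith
    then show "a' t = CW n \<alpha> \<tau> (L' t) p"
    proof cases
      case 1 then show ?thesis using mid p by blast
    next
      case 2
      hence "a' t = a t" "w' t = w t" "L' t = L t" using a' w' before by auto
      thus ?thesis using W p by simp
    next
      case 3
      hence "a' t = a t" "w' t = w t" "L' t = L t" using a' w' after by auto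
      thus ?thesis using W p by simp
    qed
  qed
qed


lemma inv_step:
  assumes n: "n \<ge> 3" and bhz: "BHZ n \<alpha> \<tau>" and nz: "\<forall>s\<in>zvec n. \<tau> s \<noteq> 0"
    and I: "Inv n \<alpha> \<tau> C" and mv: "wmove n C C'"
  shows "Inv n \<alpha> \<tau> C'"
proof -
  obtain w a L where C: "C = (w, a, L)" by (cases C) auto
  obtain w' a' L' where C': "C' = (w', a', L')" by (cases C') auto
  have wlt: "\<forall>t. w t < n" and c: "labels_consistent n w L" and ap: "\<forall>t. aperm n (L t)"
    and wg: "weights_given n \<alpha> \<tau> w a L" using I C by (auto simp: Inv_def)
  have n2: "n \<ge> 2" using n by simp
  obtain k where c': "labels_consistent n w' L'" and Lk: "L' k = L k" and
    D: "(adjacent_letters n (w k) (w (k + 1)) \<and> w (k + 2) = w k \<and> a k + a (k + 2) \<noteq> 0 \<and>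
         w' = w(k := w (k + 1), k + 1 := w k, k + 2 := w (k + 1)) \<and>
         a' = a(k := a (k + 1) * a (k + 2) / (a k + a (k + 2)),
                k + 1 := a k + a (k + 2),
                k + 2 := a k * a (k + 1) / (a k + a (k + 2))))
        \<or>
        (commuting_letters n (w k) (w (k + 1)) \<and>
         w' = w(k := w (k + 1), k + 1 := w k) \<and>
         a' = a(k := a (k + 1), k + 1 := a k))"
    using mv C C' unfolding wmove_def by auto
  have ap': "\<forall>t. aperm n (L' t)" using prop_aperm[OF n2 c', of k] Lk ap by simp
  have wlt': "\<forall>t. w' t < n" using D wlt by auto
  have wg': "weights_given n \<alpha> \<tau> w' a' L'"
    using D
  proof
    assume h: "adjacent_letters n (w k) (w (k + 1)) \<and> w (k + 2) = w k \<and> a k + a (k + 2) \<noteq> 0 \<and>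
         w' = w(k := w (k + 1), k + 1 := w k, k + 2 := w (k + 1)) \<and>
         a' = a(k := a (k + 1) * a (k + 2) / (a k + a (k + 2)),
                k + 1 := a k + a (k + 2),
                k + 2 := a k * a (k + 1) / (a k + a (k + 2)))"
    show ?thesis using step_braid[OF n wlt c ap wg c' Lk bhz nz] h by blast
  next
    assume h: "commuting_letters n (w k) (w (k + 1)) \<and>
         w' = w(k := w (k + 1), k + 1 := w k) \<and>
         a' = a(k := a (k + 1), k + 1 := a k)"
    show ?thesis using step_comm[OF n wlt c ap wg c' Lk] h by blast
  qed
  show ?thesis using C' wlt' c' ap' wg' by (simp add: Inv_def)
qed

theorem theorem5p5:
  fixes n :: nat and \<alpha> :: "nat \<Rightarrow> real" and \<tau> :: "(nat \<Rightarrow> int) \<Rightarrow> real"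
    and w w' :: "int \<Rightarrow> nat" and a a' :: "int \<Rightarrow> real" and L L' :: "int \<Rightarrow> int \<Rightarrow> int"
    and r :: int
  assumes "n \<ge> 3"
    and "biinf_reduced n w"
    and "cylindric_BHZ n \<alpha> \<tau>"
    and "\<forall>s\<in>zvec n. \<tau> s \<noteq> 0"
    and "labels_consistent n w L"
    and "L r = id"
    and "weights_given n \<alpha> \<tau> w a L"
    and "(wmove n)\<^sup>*\<^sup>* (w, a, L) (w', a', L')"
  shows "weights_given n \<alpha> \<tau> w' a' L'"
proof -
  note n = assms(1)
  have n2: "n \<ge> 2" using n by simp
  have bhz: "BHZ n \<alpha> \<tau>" using assms(3) by (simp add: cylindric_BHZ_def)
  have wlt: "\<forall>t. w t < n" using assms(2) by (simp add: biinf_reduced_def)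
  have ap: "\<forall>t. aperm n (L t)" using prop_aperm[OF n2 assms(5), of r] assms(6) aperm_id by simp
  have I0: "Inv n \<alpha> \<tau> (w, a, L)" using wlt assms(5) ap assms(7) by (simp add: Inv_def)
  have "Inv n \<alpha> \<tau> (w', a', L')"
    using assms(8) I0
  proof (induction rule: rtranclp_induct)
    case base then show ?case .
  next
    case (step y z)
    then show ?case using inv_step[OF n bhz assms(4)] by blast
  qed
  thus ?thesis by (simp add: Inv_def)
qed


end
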